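(* Let $\mathcal{Z}=(L,\prec)$ where $L\subseteq\{0,1,2,3\}^*$ is the regular language $\{\varepsilon\}\cup 2(0+2)^*\cup 2(0+2)^*(1+3)0^*\cup 30^*\cup 10^*$ and $\prec$ is the radix order on $L$ (shorter words first, words of equal length ordered lexicographically with $0\prec1\prec2\prec3$). Then $\mathcal{Z}$ is not addable, i.e. the set $\{(x,y,x+y):x,y\in\mathbb{N}\}$ is not $\mathcal{Z}$-recognizable.
   Context: For an ANS $(L,\prec)$, $\mathrm{rep}(n)$ is the $n$-th word of $L$ in the order $\prec$ (with $\mathrm{rep}(0)=\varepsilon$ here) and $\mathrm{val}=\mathrm{rep}^{-1}$. A triple $(n_1,n_2,n_3)$ is represented by left-padding $\mathrm{rep}(n_1),\mathrm{rep}(n_2),\mathrm{rep}(n_3)$ with a new symbol $\#$ to a common length and reading them in parallel as a word over $(\{0,1,2,3\}\cup\{\#\})^3$; a set of triples is $\mathcal{Z}$-recognizable if the set of its representations is a regular language. (This ANS is the Dumont–Thomas numeration system of the substitution $a\mapsto abab$, $b\mapsto b$.) *)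

theory Defs
  imports Main
begin

definition L :: "nat list set" where
  "L = {[]}
     \<union> {2 # u | u. set u \<subseteq> {0, 2}}
     \<union> {2 # u @ [d] @ replicate k 0 | u d k. set u \<subseteq> {0, 2} \<and> d \<in> {1, 3}}
     \<union> {3 # replicate k 0 | k. True}
     \<union> {1 # replicate k 0 | k. True}"

definition radix_less :: "nat list \<Rightarrow> nat list \<Rightarrow> bool" where
  "radix_less u v \<longleftrightarrow> length u < length v \<or>
     (length u = length v \<and> (u, v) \<in> lexord {(a, b). a < b})"

definition rep :: "nat \<Rightarrow> nat list" where
  "rep n = (THE w. w \<in> L \<and> card {v \<in> L. radix_less v w} = n)"

text \<open>Left padding with the new symbol # (encoded as None) to length k.\<close>
definition pad :: "nat \<Rightarrow> nat list \<Rightarrow> nat option list" where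
  "pad k w = replicate (k - length w) None @ map Some w"

definition rep3 :: "nat \<Rightarrow> nat \<Rightarrow> nat \<Rightarrow> (nat option \<times> nat option \<times> nat option) list" where
  "rep3 n1 n2 n3 =
     (let k = max (length (rep n1)) (max (length (rep n2)) (length (rep n3)))
      in zip (pad k (rep n1)) (zip (pad k (rep n2)) (pad k (rep n3))))"

definition Sigma3 :: "(nat option \<times> nat option \<times> nat option) set" where
  "Sigma3 = (let D = {None, Some 0, Some 1, Some 2, Some 3} in D \<times> D \<times> D)"

definition regular_over :: "'a set \<Rightarrow> 'a list set \<Rightarrow> bool" where
  "regular_over \<Sigma> A \<longleftrightarrow> A \<subseteq> lists \<Sigma> \<and>
     (\<exists>(Q :: nat set) q0 \<delta> F. finite Q \<and> q0 \<in> Q \<and> (\<forall>q\<in>Q. \<forall>a\<in>\<Sigma>. \<delta> q a \<in> Q) \<and> F \<subseteq> Q \<and>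
        A = {w \<in> lists \<Sigma>. fold (\<lambda>a q. \<delta> q a) w q0 \<in> F})"

definition Z_recognizable :: "(nat \<times> nat \<times> nat) set \<Rightarrow> bool" where
  "Z_recognizable X \<longleftrightarrow> regular_over Sigma3 {rep3 n1 n2 n3 | n1 n2 n3. (n1, n2, n3) \<in> X}"

end

theory Submission
  imports Defs
begin


lemma L_set: "w \<in> L \<Longrightarrow> set w \<subseteq> {0,1,2,3}"
  unfolding L_def by auto

definition AL :: "nat \<Rightarrow> nat list set" where "AL n = {v \<in> L. length v \<le> n}"
definition S :: "nat \<Rightarrow> nat" where "S n = card (AL n)"
definition val :: "nat list \<Rightarrow> nat" where "val w = card {v \<in> L. radix_less v w}"

lemma fin_AL: "finite (AL n)"
proof -
  have "AL n \<subseteq> {xs. set xs \<subseteq> {0,1,2,3} \<and> length xs \<le> n}"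
    using L_set unfolding AL_def by auto
  moreover have "finite {xs. set xs \<subseteq> {0::nat,1,2,3} \<and> length xs \<le> n}"
    by (rule finite_lists_length_le) simp
  ultimately show ?thesis by (rule finite_subset)
qed

lemma radix_conv: "radix_less u v \<longleftrightarrow> length u < length v \<or> (length u = length v \<and> ord_class.lexordp u v)"
  unfolding radix_less_def lexordp_conv_lexord by simp

lemma radix_irrefl: "\<not> radix_less w w"
  by (simp add: radix_conv lexordp_irreflexive')

lemma radix_trans: "radix_less u v \<Longrightarrow> radix_less v w \<Longrightarrow> radix_less u w"
  unfolding radix_conv using lexordp_trans by fastforce

lemma radix_total: "u \<noteq> v \<Longrightarrow> radix_less u v \<or> radix_less v u"
  unfolding radix_conv using lexordp_linear by (metis linorder_neqE_nat)

lemma pred_sub: "w \<in> L \<Longrightarrow> {v \<in> L. radix_less v w} \<subseteq> AL (length w) - {w}"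
  unfolding AL_def radix_conv using lexordp_irreflexive' by fastforce

lemma fin_pred: "w \<in> L \<Longrightarrow> finite {v \<in> L. radix_less v w}"
  using pred_sub fin_AL finite_subset by (metis finite_Diff)

lemma val_less: "w \<in> L \<Longrightarrow> length w \<le> n \<Longrightarrow> val w < S n"
proof -
  assume w: "w \<in> L" "length w \<le> n"
  have "{v \<in> L. radix_less v w} \<subseteq> AL n - {w}"
    using pred_sub[OF w(1)] w(2) unfolding AL_def by auto
  hence "val w \<le> card (AL n - {w})" unfolding val_def
    by (intro card_mono) (simp_all add: fin_AL)
  moreover have "w \<in> AL n" using w unfolding AL_def by auto
  ultimately show ?thesis unfolding S_def using fin_AL
    by (metis card_Diff1_less dual_order.strict_trans2)
qed

lemma val_mono: "u \<in> L \<Longrightarrow> w \<in> L \<Longrightarrow> radix_less u w \<Longrightarrow> val u < val w"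
proof -
  assume a: "u \<in> L" "w \<in> L" "radix_less u w"
  have "{v \<in> L. radix_less v u} \<subset> {v \<in> L. radix_less v w}"
    using a radix_trans radix_irrefl by blast
  thus ?thesis unfolding val_def using fin_pred[OF a(2)] by (rule psubset_card_mono[rotated])
qed

lemma val_inj: "inj_on val L"
  unfolding inj_on_def by (metis radix_total val_mono less_irrefl)

lemma S_lower: "2 * n + 1 \<le> S n"
proof (induction n)
  case 0
  have "[] \<in> AL 0" unfolding AL_def L_def by auto
  hence "1 \<le> S 0" unfolding S_def using fin_AL
    by (metis One_nat_def Suc_leI card_gt_0_iff empty_iff)
  thus ?case by simp
next
  case (Suc n)
  let ?a = "1 # replicate n (0::nat)" and ?b = "3 # replicate n (0::nat)"
  have "?a \<in> L" "?b \<in> L" unfolding L_def by blast+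
  hence sub: "insert ?a (insert ?b (AL n)) \<subseteq> AL (Suc n)"
    unfolding AL_def by auto
  have "?a \<notin> AL n" "?b \<notin> AL n" unfolding AL_def by auto
  hence "card (insert ?a (insert ?b (AL n))) = S n + 2"
    unfolding S_def using fin_AL by simp
  hence "S n + 2 \<le> S (Suc n)" unfolding S_def using card_mono[OF fin_AL sub] by simp
  thus ?case using Suc by simp
qed

lemma val_surj: "\<exists>w\<in>L. val w = n"
proof -
  have "inj_on val (AL n)" using val_inj unfolding AL_def by (rule inj_on_subset) auto
  hence c: "card (val ` AL n) = S n" unfolding S_def by (rule card_image)
  have sub: "val ` AL n \<subseteq> {..<S n}" using val_less unfolding AL_def by auto
  have "val ` AL n = {..<S n}" by (rule card_subset_eq) (use c sub in auto)
  moreover have "n < S n" using S_lower[of n] by simp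
  ultimately have "n \<in> val ` AL n" by simp
  thus ?thesis unfolding AL_def by blast
qed

lemma rep_prop: "rep n \<in> L \<and> val (rep n) = n"
proof -
  obtain w where w: "w \<in> L" "val w = n" using val_surj by blast
  have "rep n = w" unfolding rep_def
  proof (rule the_equality)
    show "w \<in> L \<and> card {v \<in> L. radix_less v w} = n" using w unfolding val_def by simp
    show "\<And>u. u \<in> L \<and> card {v \<in> L. radix_less v u} = n \<Longrightarrow> u = w"
      using w val_inj unfolding val_def inj_on_def by metis
  qed
  thus ?thesis using w by simp
qed

lemma rep_val: "w \<in> L \<Longrightarrow> rep (val w) = w"
  using rep_prop val_inj unfolding inj_on_def by metis

lemma L_cases: "v \<in> L \<Longrightarrow> v = [] \<or> (\<exists>u. set u \<subseteq> {0,2} \<and> v = 2#u)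
  \<or> (\<exists>u d k. set u \<subseteq> {0,2} \<and> d \<in> {1,3} \<and> v = 2 # u @ d # replicate k 0)
  \<or> (\<exists>k. v = 3 # replicate k 0) \<or> (\<exists>k. v = 1 # replicate k 0)"
  unfolding L_def by auto

lemma lex_not_below_one:
  assumes v: "v \<in> L" "length v = Suc j"
  shows "\<not> ord_class.lexordp v (1 # replicate j (0::nat))"
proof
  assume "ord_class.lexordp v (1 # replicate j (0::nat))"
  then consider (a) x vs where "1 # replicate j 0 = v @ x # vs"
    | (b) us a b vs ws where "a < b" "v = us @ a # vs" "1 # replicate j 0 = us @ b # ws"
    unfolding lexordp_iff by blast
  then show False
  proof cases
    case a
    then show ?thesis using v by (metis length_Cons length_append length_replicate add_Suc_right lessI less_add_Suc1 not_less_eq)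
  next
    case b
    show ?thesis
    proof (cases us)
      case Nil
      then have "a = 0" "v = 0 # vs" using b by auto
      then show ?thesis using L_cases[OF v(1)] by auto
    next
      case (Cons c us')
      then have "b \<in> set (replicate j (0::nat))" using b by auto
      then show ?thesis using b by auto
    qed
  qed
qed

lemma lexordp_asym': "ord_class.lexordp (u::nat list) v \<Longrightarrow> \<not> ord_class.lexordp v u"
  using lexordp_trans lexordp_irreflexive' by blast

lemma val_one: "val (1 # replicate j 0) = S j"
proof -
  have w: "1 # replicate j 0 \<in> L" unfolding L_def by blast
  have "{v \<in> L. radix_less v (1 # replicate j 0)} = AL j"
  proof
    show "{v \<in> L. radix_less v (1 # replicate j 0)} \<subseteq> AL j"
      using lex_not_below_one unfolding AL_def radix_conv by fastforce
    show "AL j \<subseteq> {v \<in> L. radix_less v (1 # replicate j 0)}"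
      unfolding AL_def radix_conv by auto
  qed
  thus ?thesis unfolding val_def S_def by simp
qed

lemma lex_not_above_three:
  assumes v: "v \<in> L" "length v = Suc k"
  shows "\<not> ord_class.lexordp (3 # replicate k (0::nat)) v"
proof
  assume "ord_class.lexordp (3 # replicate k (0::nat)) v"
  then consider (a) x vs where "v = (3 # replicate k 0) @ x # vs"
    | (b) us a b vs ws where "a < b" "3 # replicate k 0 = us @ a # vs" "v = us @ b # ws"
    unfolding lexordp_iff by blast
  then show False
  proof cases
    case a
    then show ?thesis using v by simp
  next
    case b
    have bs: "b \<le> 3" using L_set[OF v(1)] b(3) by auto
    show ?thesis
    proof (cases us)
      case Nil
      then show ?thesis using b bs by auto
    next
      case (Cons c us')
      then have "c = 3" using b by auto
      then have "hd v = 3" "v \<noteq> []" using b Cons by simp_all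
      then obtain k' where "v = 3 # replicate k' 0" using L_cases[OF v(1)] by auto
      then have "us' @ b # ws = replicate k' 0" using b Cons by auto
      then have "b \<in> set (replicate k' (0::nat))" by (metis in_set_conv_decomp)
      then show ?thesis using b by auto
    qed
  qed
qed

lemma val_three: "val (3 # replicate k 0) = S (Suc k) - 1"
proof -
  let ?w = "3 # replicate k (0::nat)"
  have w: "?w \<in> L" unfolding L_def by blast
  have "{v \<in> L. radix_less v ?w} = AL (Suc k) - {?w}"
  proof
    show "{v \<in> L. radix_less v ?w} \<subseteq> AL (Suc k) - {?w}" using pred_sub[OF w] by simp
    show "AL (Suc k) - {?w} \<subseteq> {v \<in> L. radix_less v ?w}"
    proof
      fix v assume "v \<in> AL (Suc k) - {?w}"
      then have v: "v \<in> L" "length v \<le> Suc k" "v \<noteq> ?w" unfolding AL_def by auto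
      show "v \<in> {v \<in> L. radix_less v ?w}"
      proof (cases "length v = Suc k")
        case True
        then show ?thesis using v lex_not_above_three[OF v(1) True] lexordp_linear[of v ?w]
          unfolding radix_conv by auto
      next
        case False
        then show ?thesis using v unfolding radix_conv by auto
      qed
    qed
  qed
  moreover have "?w \<in> AL (Suc k)" using w unfolding AL_def by simp
  ultimately show ?thesis unfolding val_def S_def using fin_AL by simp
qed




definition gw :: "nat \<Rightarrow> nat \<Rightarrow> nat list" where
  "gw K i = replicate i 2 @ 3 # replicate (K - 1 - i) 0"

lemma gw_L: "gw K i \<in> L"
proof (cases i)
  case 0
  have "3 # replicate (K - 1) 0 \<in> L" unfolding L_def by blast
  then show ?thesis unfolding gw_def 0 by simp
next
  case (Suc i')
  have "set (replicate i' (2::nat)) \<subseteq> {0,2}" by (simp add: set_replicate_conv_if)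
  hence "2 # replicate i' 2 @ [3] @ replicate (K - 1 - i) 0 \<in> L"
    unfolding L_def by blast
  then show ?thesis unfolding gw_def Suc by simp
qed

lemma gw_len: "i < K \<Longrightarrow> length (gw K i) = K"
  unfolding gw_def by simp

lemma lex_above_two:
  assumes v: "v \<in> L" "length v = K"
  shows "ord_class.lexordp (replicate K (2::nat)) v \<longleftrightarrow> (\<exists>i<K. v = gw K i)"
proof
  assume "ord_class.lexordp (replicate K (2::nat)) v"
  then consider (a) x vs where "v = replicate K 2 @ x # vs"
    | (b) us a b vs ws where "a < b" "replicate K 2 = us @ a # vs" "v = us @ b # ws"
    unfolding lexordp_iff by blast
  then show "\<exists>i<K. v = gw K i"
  proof cases
    case a
    then show ?thesis using v by simp
  next
    case b
    have "a \<in> set (replicate K (2::nat))" using b(2) by simp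
    hence a2: "a = 2" by simp
    have "b \<le> 3" using L_set[OF v(1)] b(3) by auto
    hence b3: "b = 3" using b(1) a2 by simp
    have "set us \<subseteq> set (replicate K (2::nat))" using b(2) by (metis Un_upper1 set_append)
    hence "\<forall>y\<in>set us. y = 2" by auto
    hence us: "us = replicate (length us) 2" by (metis replicate_length_same)
    define i where "i = length us"
    have v2: "v = replicate i 2 @ 3 # ws" using b(3) us b3 unfolding i_def by metis
    have "ws = replicate (K - 1 - i) 0"
    proof -
      have "3 \<in> set v" using v2 by simp
      then consider (c1) u d k where "set u \<subseteq> {0,2}" "d \<in> {1,3}" "v = 2 # u @ d # replicate k 0"
        | (c2) k where "v = 3 # replicate k 0"
        using L_cases[OF v(1)] by auto
      then show ?thesis
      proof cases
        case c1
        have "d = 3" using c1 \<open>3 \<in> set v\<close> by auto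
        hence "(2 # u) @ 3 # replicate k 0 = replicate i 2 @ 3 # ws" using c1 v2 by simp
        hence "replicate k 0 = ws" using c1(1)
          by (subst (asm) append_Cons_eq_iff) auto
        moreover have "length ws = K - 1 - i" using v v2 by simp
        ultimately show ?thesis by (metis length_replicate)
      next
        case c2
        have "i = 0" using c2 v2 by (cases i) auto
        then show ?thesis using c2 v2 v by simp
      qed
    qed
    moreover have "i < K" using v v2 by simp
    ultimately show ?thesis using v2 unfolding gw_def by blast
  qed
next
  assume "\<exists>i<K. v = gw K i"
  then obtain i where i: "i < K" "v = gw K i" by blast
  define r where "r = K - 1 - i"
  have Kr: "K = i + Suc r" using i(1) unfolding r_def by simp
  have "replicate K (2::nat) = replicate i 2 @ 2 # replicate r 2"
    by (subst Kr) (simp add: replicate_add replicate_append_same)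
  then show "ord_class.lexordp (replicate K (2::nat)) v"
    using i(2) unfolding gw_def by (simp add: lexordp_append_left_rightI)
qed

lemma val_two:
  assumes K: "K \<ge> 1"
  shows "val (replicate K 2) = S K - Suc K"
proof -
  let ?w = "replicate K (2::nat)"
  obtain K' where K': "K = Suc K'" using K by (cases K) auto
  have "set (replicate K' (2::nat)) \<subseteq> {0,2}" by (simp add: set_replicate_conv_if)
  hence "2 # replicate K' (2::nat) \<in> L" unfolding L_def by blast
  hence w: "?w \<in> L" using K' by simp
  define G where "G = insert ?w (gw K ` {..<K})"
  have "{v \<in> L. radix_less v ?w} = AL K - G"
  proof
    show "{v \<in> L. radix_less v ?w} \<subseteq> AL K - G"
    proof
      fix v assume "v \<in> {v \<in> L. radix_less v ?w}"
      then have v: "v \<in> L" "radix_less v ?w" by auto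
      have "v \<in> AL K" using pred_sub[OF w] v by auto
      moreover have "v \<notin> G"
      proof
        assume "v \<in> G"
        then consider "v = ?w" | i where "i < K" "v = gw K i" unfolding G_def by auto
        then show False
        proof cases
          case 1 then show ?thesis using v radix_irrefl by simp
        next
          case 2
          then have "ord_class.lexordp ?w v" using lex_above_two[OF v(1)] gw_len by auto
          moreover have "ord_class.lexordp v ?w" using v(2) 2 gw_len unfolding radix_conv by auto
          ultimately show False using lexordp_asym' by blast
        qed
      qed
      ultimately show "v \<in> AL K - G" by simp
    qed
    show "AL K - G \<subseteq> {v \<in> L. radix_less v ?w}"
    proof
      fix v assume "v \<in> AL K - G"
      then have v: "v \<in> L" "length v \<le> K" "v \<notin> G" unfolding AL_def by auto
      show "v \<in> {v \<in> L. radix_less v ?w}"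
      proof (cases "length v = K")
        case True
        have "v \<noteq> ?w" using v(3) unfolding G_def by auto
        moreover have "\<not> ord_class.lexordp ?w v" using lex_above_two[OF v(1) True] v(3) unfolding G_def by auto
        ultimately show ?thesis using v True lexordp_linear[of v ?w] unfolding radix_conv by auto
      next
        case False
        then show ?thesis using v unfolding radix_conv by auto
      qed
    qed
  qed
  moreover have GA: "G \<subseteq> AL K" unfolding G_def AL_def using w gw_L gw_len by auto
  moreover have "card G = Suc K"
  proof -
    have inj: "inj_on (gw K) {..<K}"
    proof
      fix i i' assume "i \<in> {..<K}" "i' \<in> {..<K}" "gw K i = gw K i'"
      then have "replicate i (2::nat) = replicate i' 2" unfolding gw_def
        by (subst (asm) append_Cons_eq_iff) auto
      then show "i = i'" by (metis length_replicate)
    qed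
    have "?w \<notin> gw K ` {..<K}"
    proof
      assume "?w \<in> gw K ` {..<K}"
      then obtain i where "?w = gw K i" by blast
      then have "(3::nat) \<in> set ?w" unfolding gw_def by simp
      then show False by simp
    qed
    then show ?thesis unfolding G_def using card_image[OF inj] by simp
  qed
  ultimately show ?thesis unfolding val_def S_def using fin_AL
    by (simp add: card_Diff_subset finite_subset)
qed



lemma pad_len: "length w \<le> k \<Longrightarrow> length (pad k w) = k"
  unfolding pad_def by simp

lemma pad_inj: "pad a u = pad b v \<Longrightarrow> u = v"
proof -
  have "\<And>k w. map the (filter (\<lambda>x. x \<noteq> None) (pad k w)) = w"
    unfolding pad_def by (simp add: filter_map comp_def)
  thus "pad a u = pad b v \<Longrightarrow> u = v" by metis
qed

lemma zip3_inj:
  assumes "length P = length Q" "length Q = length R" "length P' = length Q'" "length Q' = length R'"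
    "zip P (zip Q R) = zip P' (zip Q' R')"
  shows "P = P' \<and> Q = Q' \<and> R = R'"
proof -
  have "map fst (zip P (zip Q R)) = P" "map fst (map snd (zip P (zip Q R))) = Q"
    "map snd (map snd (zip P (zip Q R))) = R" using assms(1,2) by simp_all
  moreover have "map fst (zip P' (zip Q' R')) = P'" "map fst (map snd (zip P' (zip Q' R'))) = Q'"
    "map snd (map snd (zip P' (zip Q' R'))) = R'" using assms(3,4) by simp_all
  ultimately show ?thesis using assms(5) by metis
qed

definition c0 :: "nat option \<times> nat option \<times> nat option" where "c0 = (Some 2, None, Some 3)"
definition cc :: "nat option \<times> nat option \<times> nat option" where "cc = (Some 2, None, Some 0)"
definition c1 :: "nat option \<times> nat option \<times> nat option" where "c1 = (Some 2, Some 1, Some 0)"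
definition c2 :: "nat option \<times> nat option \<times> nat option" where "c2 = (Some 2, Some 0, Some 0)"

definition W :: "nat \<Rightarrow> nat \<Rightarrow> (nat option \<times> nat option \<times> nat option) list" where
  "W j m = (c0 # replicate m cc) @ (c1 # replicate j c2)"

lemma rep_split: "replicate (m+j+2) x = (x # replicate m x) @ (x # replicate j x)"
proof -
  have "m+j+2 = Suc m + Suc j" by simp
  then show ?thesis by (simp only: replicate_add) simp
qed

lemma rep_split': "replicate (m+j+1) x = replicate m x @ (x # replicate j x)"
proof -
  have "m+j+1 = m + Suc j" by simp
  then show ?thesis by (simp only: replicate_add) simp
qed

lemma W_zip:
  "W j m = zip (pad (m+j+2) (replicate (m+j+2) 2))
      (zip (pad (m+j+2) (1 # replicate j 0)) (pad (m+j+2) (3 # replicate (m+j+1) 0)))"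
proof -
  have p1: "pad (m+j+2) (replicate (m+j+2) (2::nat)) = (Some 2 # replicate m (Some 2)) @ (Some 2 # replicate j (Some 2))"
    unfolding pad_def by (simp only: rep_split) simp
  have p2: "pad (m+j+2) (1 # replicate j (0::nat)) = (None # replicate m None) @ (Some 1 # replicate j (Some 0))"
    unfolding pad_def by (simp add: replicate_append_same)
  have p3: "pad (m+j+2) (3 # replicate (m+j+1) (0::nat)) = (Some 3 # replicate m (Some 0)) @ (Some 0 # replicate j (Some 0))"
    unfolding pad_def by (simp only: rep_split') simp
  show ?thesis unfolding p1 p2 p3 W_def c0_def cc_def c1_def c2_def
    by (simp add: zip_replicate)
qed

lemma W_rep3:
  "W j m = rep3 (val (replicate (m+j+2) 2)) (val (1 # replicate j 0)) (val (3 # replicate (m+j+1) 0))"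
proof -
  have l1: "replicate (m+j+2) (2::nat) \<in> L"
  proof -
    have "set (replicate (m+j+1) (2::nat)) \<subseteq> {0,2}" by (simp add: set_replicate_conv_if)
    hence "2 # replicate (m+j+1) (2::nat) \<in> L" unfolding L_def by blast
    thus ?thesis by simp
  qed
  have l2: "1 # replicate j (0::nat) \<in> L" unfolding L_def by blast
  have l3: "3 # replicate (m+j+1) (0::nat) \<in> L" unfolding L_def by blast
  show ?thesis unfolding rep3_def rep_val[OF l1] rep_val[OF l2] rep_val[OF l3] W_zip
    by (simp add: Let_def max_def)
qed

definition AS :: "(nat option \<times> nat option \<times> nat option) list set" where
  "AS = {rep3 n1 n2 n3 | n1 n2 n3. (n1, n2, n3) \<in> {(x, y, x + y) | x y :: nat. True}}"

lemma W_in_iff: "W j m \<in> AS \<longleftrightarrow> S j = m + j + 2"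
proof
  assume "S j = m + j + 2"
  moreover have "S (m+j+2) \<ge> 2 * (m+j+2) + 1" by (rule S_lower)
  ultimately have "val (replicate (m+j+2) 2) + val (1 # replicate j 0) = val (3 # replicate (m+j+1) 0)"
    using val_two[of "m+j+2"] val_one[of j] val_three[of "m+j+1"] by simp
  then have "(val (replicate (m+j+2) 2), val (1 # replicate j 0), val (3 # replicate (m+j+1) 0))
     \<in> {(x, y, x + y) | x y :: nat. True}" by (metis (mono_tags, lifting) CollectI)
  then show "W j m \<in> AS" unfolding AS_def W_rep3 by blast
next
  assume "W j m \<in> AS"
  then obtain x y where xy: "W j m = rep3 x y (x + y)" unfolding AS_def by blast
  define k where "k = max (length (rep x)) (max (length (rep y)) (length (rep (x + y))))"
  have zeq: "zip (pad k (rep x)) (zip (pad k (rep y)) (pad k (rep (x+y)))) =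
      zip (pad (m+j+2) (replicate (m+j+2) 2))
      (zip (pad (m+j+2) (1 # replicate j 0)) (pad (m+j+2) (3 # replicate (m+j+1) 0)))"
    using xy W_zip unfolding rep3_def k_def Let_def by metis
  moreover have "length (pad k (rep x)) = k" "length (pad k (rep y)) = k" "length (pad k (rep (x+y))) = k"
    unfolding k_def by (simp_all add: pad_len)
  moreover have "length (pad (m+j+2) (replicate (m+j+2) (2::nat))) = m+j+2"
     "length (pad (m+j+2) (1 # replicate j (0::nat))) = m+j+2"
     "length (pad (m+j+2) (3 # replicate (m+j+1) (0::nat))) = m+j+2"
    by (simp_all add: pad_len)
  ultimately have "pad k (rep x) = pad (m+j+2) (replicate (m+j+2) 2) \<and>
      pad k (rep y) = pad (m+j+2) (1 # replicate j 0) \<and>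
      pad k (rep (x+y)) = pad (m+j+2) (3 # replicate (m+j+1) 0)"
    by (intro zip3_inj[OF _ _ _ _ zeq]) simp_all
  hence r: "rep x = replicate (m+j+2) 2" "rep y = 1 # replicate j 0" "rep (x+y) = 3 # replicate (m+j+1) 0"
    using pad_inj by blast+
  have "val (rep x) + val (rep y) = val (rep (x + y))" using rep_prop by simp
  hence "S (m+j+2) - Suc (m+j+2) + S j = S (Suc (m+j+1)) - 1"
    unfolding r using val_two[of "m+j+2"] val_one[of j] val_three[of "m+j+1"] by simp
  moreover have "S (m+j+2) \<ge> 2 * (m+j+2) + 1" by (rule S_lower)
  ultimately show "S j = m + j + 2" by simp
qed

lemma fold_in_Q:
  assumes "\<forall>q\<in>Q. \<forall>a\<in>\<Sigma>. \<delta> q a \<in> Q"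
  shows "q \<in> Q \<Longrightarrow> set w \<subseteq> \<Sigma> \<Longrightarrow> fold (\<lambda>a q. \<delta> q a) w q \<in> Q"
  using assms by (induction w arbitrary: q) auto

lemma W_Sigma: "set (W j m) \<subseteq> Sigma3"
  unfolding W_def Sigma3_def c0_def cc_def c1_def c2_def Let_def by (auto simp: set_replicate_conv_if)

lemma W_pump: "W j (i + r) = (c0 # replicate i cc) @ (replicate r cc @ c1 # replicate j c2)"
  unfolding W_def by (simp add: replicate_add)

theorem mainTheorem10:
  shows "\<not> Z_recognizable {(x, y, x + y) | x y :: nat. True}"
proof
  assume "Z_recognizable {(x, y, x + y) | x y :: nat. True}"
  then have "regular_over Sigma3 AS" unfolding Z_recognizable_def AS_def by simp
  then obtain Q :: "nat set" and q0 \<delta> F where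
    fQ: "finite Q" and q0: "q0 \<in> Q" and dQ: "\<forall>q\<in>Q. \<forall>a\<in>Sigma3. \<delta> q a \<in> Q"
    and AS: "AS = {w \<in> lists Sigma3. fold (\<lambda>a q. \<delta> q a) w q0 \<in> F}"
    unfolding regular_over_def by blast
  define f where "f = (\<lambda>w. fold (\<lambda>a q. \<delta> q a) w q0)"
  define st where "st = (\<lambda>i. f (c0 # replicate i cc))"
  have stQ: "st i \<in> Q" for i
  proof -
    have "set (c0 # replicate i cc) \<subseteq> Sigma3"
      unfolding Sigma3_def c0_def cc_def Let_def by (auto simp: set_replicate_conv_if)
    thus ?thesis unfolding st_def f_def using fold_in_Q[OF dQ q0] by blast
  qed
  have "\<not> inj_on st {..card Q}"
  proof
    assume "inj_on st {..card Q}"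
    hence "card (st ` {..card Q}) = Suc (card Q)" by (simp add: card_image)
    moreover have "card (st ` {..card Q}) \<le> card Q" using stQ fQ by (intro card_mono) auto
    ultimately show False by simp
  qed
  then obtain i1 i2 where i: "i1 < i2" "i2 \<le> card Q" "st i1 = st i2"
    unfolding inj_on_def by (metis atMost_iff linorder_neqE_nat)
  define j where "j = card Q + 1"
  define m0 where "m0 = S j - j - 2"
  have Sj: "S j \<ge> 2 * j + 1" by (rule S_lower)
  have m0: "S j = m0 + j + 2" "m0 \<ge> i1" using Sj i unfolding m0_def j_def by simp_all
  define r where "r = m0 - i1"
  have "W j m0 \<in> AS" using W_in_iff m0(1) by simp
  hence "f (W j (i1 + r)) \<in> F" using m0(2) unfolding AS f_def r_def by simp
  moreover have "f (W j (i1 + r)) = f (W j (i2 + r))"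
    unfolding W_pump f_def fold_append comp_def using i(3) unfolding st_def f_def by simp
  moreover have "W j (i2 + r) \<in> lists Sigma3" using W_Sigma[of j "i2+r"] by (metis in_listsI subsetD)
  ultimately have "W j (i2 + r) \<in> AS" unfolding AS f_def by simp
  hence "S j = i2 + r + j + 2" using W_in_iff by simp
  thus False using m0 i unfolding r_def by simp
qed

end
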